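(* Consider a group of $p'$ PEs where PE $i$ holds a sorted string array $S_i'$ and let $V_i$ be the sample strings drawn by PE $i$ under character-based regular sampling with sampling distance $\omega'$. For $i\in\{0,\dots,p'-1\}$ let $S_i''=\{s\in S_i': a\le s\le b\}$ be an arbitrary contiguous subsequence of $S_i'$. If $|S_i''\cap V_i|=k$ for a nonnegative integer $k$, then $\|S_i''\|\le(k+1)(\omega'+\hat{\ell})$.
   Context: $\hat{\ell}$ is the length of the longest string and $\|X\|$ the number of characters of a set of strings $X$. Character-based regular sampling: with $\omega'=\|S'\|/(p'(v+1))$ for the concatenation $S'$ of the group's arrays and a sampling factor $v$, PE $i$ draws $\lceil\|S_i'\|/\omega'\rceil-1$ equally spaced positions in its character array (the concatenation of the characters of its strings in sorted order), so that fewer than $\omega'$ characters lie between consecutive sampled positions; each sampled position is shifted by at most $\hat{\ell}-1$ towards the beginning of the string containing it, and the strings thus reached form $V_i$. *)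

theory Defs
  imports Complex_Main "HOL-Library.List_Lexorder"
begin

text \<open>Strings are lists over a linearly ordered alphabet; strings are compared
lexicographically (instance from List_Lexorder). A PE's string array is a list of strings.\<close>

definition charlen :: "'a list list \<Rightarrow> nat" where
  "charlen xs = sum_list (map length xs)"

definition str_start :: "'a list list \<Rightarrow> nat \<Rightarrow> nat" where
  "str_start xs j = charlen (take j xs)"

definition omega :: "nat \<Rightarrow> (nat \<Rightarrow> 'a list list) \<Rightarrow> nat \<Rightarrow> real" where
  "omega p' S v = real (\<Sum>j<p'. charlen (S j)) / (real p' * (real v + 1))"

definition num_samples :: "'a list list \<Rightarrow> real \<Rightarrow> nat" where
  "num_samples xs w = nat \<lceil>real (charlen xs) / w\<rceil> - 1"

definition sample_positions :: "'a list list \<Rightarrow> real \<Rightarrow> nat set" where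
  "sample_positions xs w =
     (\<lambda>j. nat \<lfloor>real j * real (charlen xs) / real (num_samples xs w + 1)\<rfloor>) `
       {1..num_samples xs w}"

text \<open>Sample strings V_i, given as the set of indices (occurrences) of the strings
  containing a sampled position (shifting a position to the beginning of its string).\<close>
definition sample_idx :: "'a list list \<Rightarrow> real \<Rightarrow> nat set" where
  "sample_idx xs w = {j. j < length xs \<and>
     (\<exists>q\<in>sample_positions xs w. str_start xs j \<le> q \<and> q < str_start xs (Suc j))}"

definition max_len :: "nat \<Rightarrow> (nat \<Rightarrow> 'a list list) \<Rightarrow> nat" where
  "max_len p' S = Max ({0} \<union> (\<Union>j<p'. length ` set (S j)))"

end

theory Submission
  imports Defs
begin

lemma gap_arith:
  fixes N m x y :: nat
  assumes xy: "x < y" and yN: "y \<le> N"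
    and nos: "\<forall>j\<in>{1..m}. \<not> (x \<le> nat \<lfloor>real j * real N / real (m+1)\<rfloor> \<and>
                 nat \<lfloor>real j * real N / real (m+1)\<rfloor> < y)"
  shows "real (y - x) \<le> real N / real (m+1)"
proof -
  define c where "c = real N / real (m+1)"
  define g where "g j = nat \<lfloor>real j * c\<rfloor>" for j
  have gdef: "nat \<lfloor>real j * real N / real (m+1)\<rfloor> = g j" for j
    unfolding g_def c_def by simp
  have c0: "c \<ge> 0" unfolding c_def by simp
  have gle: "real (g j) \<le> real j * c" for j
    unfolding g_def using c0 by (simp add: of_nat_floor)
  have ggt: "real j * c < real (g j) + 1" for j
  proof -
    have "0 \<le> real j * c" using c0 by simp
    then have "real (g j) = real_of_int \<lfloor>real j * c\<rfloor>" unfolding g_def by simp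
    then show ?thesis using real_of_int_floor_add_one_gt[of "real j * c"] by linarith
  qed
  have nos': "\<And>j. 1 \<le> j \<Longrightarrow> j \<le> m \<Longrightarrow> \<not> (x \<le> g j \<and> g j < y)"
    using nos gdef by auto
  define J where "J = {j. j \<le> m \<and> g j \<le> x}"
  have g0: "g 0 = 0" unfolding g_def by simp
  have finJ: "finite J" unfolding J_def by auto
  have "0 \<in> J" unfolding J_def using g0 by simp
  define j0 where "j0 = Max J"
  have j0J: "j0 \<in> J" using finJ \<open>0 \<in> J\<close> unfolding j0_def by (intro Max_in) auto
  have j0max: "\<And>j. j \<in> J \<Longrightarrow> j \<le> j0" using finJ unfolding j0_def by simp
  have yb: "real y \<le> real (j0 + 1) * c"
  proof (cases "j0 < m")
    case True
    have "Suc j0 \<notin> J" using j0max by fastforce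
    then have "x < g (Suc j0)" using True unfolding J_def by auto
    then have "y \<le> g (Suc j0)" using nos'[of "Suc j0"] True by auto
    then show ?thesis using gle[of "Suc j0"] by simp
  next
    case False
    then have "j0 = m" using j0J unfolding J_def by auto
    then have "real (j0+1) * c = real N" unfolding c_def by simp
    then show ?thesis using yN by simp
  qed
  show ?thesis
  proof (cases "j0 = 0")
    case True
    then show ?thesis using yb xy unfolding c_def by simp
  next
    case False
    have "g j0 \<le> x" "j0 \<le> m" using j0J unfolding J_def by auto
    then have "g j0 < x" using nos'[of j0] False xy by fastforce
    then have "real j0 * c < real x" using ggt[of j0] by linarith
    then have "real y - real x < c" using yb by (simp add: algebra_simps)
    then show ?thesis using xy unfolding c_def by simp
  qed
qed

lemma find_seg:
  fixes F :: "nat \<Rightarrow> nat"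
  assumes mono: "mono F"
  shows "F l \<le> q \<Longrightarrow> q < F r \<Longrightarrow> \<exists>t. l \<le> t \<and> t < r \<and> F t \<le> q \<and> q < F (Suc t)"
proof (induction r)
  case 0
  then show ?case using mono by (metis le_0_eq leD monoD nat_le_linear order_trans)
next
  case (Suc r)
  show ?case
  proof (cases "F r \<le> q")
    case True
    have "l \<le> r"
    proof (rule ccontr)
      assume "\<not> l \<le> r"
      then have "Suc r \<le> l" by simp
      then have "F (Suc r) \<le> F l" using mono by (simp add: monoD)
      then show False using Suc.prems by simp
    qed
    then show ?thesis using True Suc.prems by auto
  next
    case False
    then show ?thesis using Suc by (meson less_Suc_eq not_le)
  qed
qed

lemma count_bound:
  fixes f :: "nat \<Rightarrow> nat" and SI :: "nat set" and c L :: real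
  assumes gap: "\<And>l r. l \<le> r \<Longrightarrow> r \<le> n \<Longrightarrow> SI \<inter> {l..<r} = {} \<Longrightarrow> real (sum f {l..<r}) \<le> c"
    and fL: "\<And>j. j < n \<Longrightarrow> real (f j) \<le> L"
  shows "card (SI \<inter> {l..<r}) = k \<Longrightarrow> l \<le> r \<Longrightarrow> r \<le> n \<Longrightarrow>
     real (sum f {l..<r}) \<le> real k * L + (real k + 1) * c"
proof (induction k arbitrary: l)
  case 0
  then have "SI \<inter> {l..<r} = {}" by simp
  then show ?case using gap 0 by simp
next
  case (Suc k)
  define A where "A = SI \<inter> {l..<r}"
  have finA: "finite A" unfolding A_def by simp
  have neA: "A \<noteq> {}" using Suc.prems unfolding A_def by auto
  define j where "j = Min A"
  have jA: "j \<in> A" unfolding j_def using finA neA by simp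
  have jmin: "\<And>t. t \<in> A \<Longrightarrow> j \<le> t" unfolding j_def using finA by simp
  have lj: "l \<le> j" "j < r" using jA unfolding A_def by auto
  have e1: "SI \<inter> {l..<j} = {}"
  proof -
    { fix t assume t: "t \<in> SI" "l \<le> t" "t < j"
      then have "t \<in> A" using lj unfolding A_def by auto
      then have False using jmin t(3) by fastforce }
    then show ?thesis by auto
  qed
  have e2: "SI \<inter> {Suc j..<r} = A - {j}"
  proof
    show "SI \<inter> {Suc j..<r} \<subseteq> A - {j}" using lj unfolding A_def by auto
    show "A - {j} \<subseteq> SI \<inter> {Suc j..<r}"
    proof
      fix t assume t: "t \<in> A - {j}"
      then have "j \<le> t" using jmin by auto
      then have "Suc j \<le> t" using t by (simp add: Suc_le_eq order.strict_iff_order)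
      then show "t \<in> SI \<inter> {Suc j..<r}" using t unfolding A_def by auto
    qed
  qed
  have ck: "card (SI \<inter> {Suc j..<r}) = k"
    using e2 Suc.prems(1) jA finA unfolding A_def by simp
  have IH: "real (sum f {Suc j..<r}) \<le> real k * L + (real k + 1) * c"
    using Suc.IH[OF ck] lj Suc.prems by simp
  have g1: "real (sum f {l..<j}) \<le> c" using gap[OF lj(1) _ e1] lj Suc.prems by simp
  have fj: "real (f j) \<le> L" using fL lj Suc.prems by simp
  have split: "sum f {l..<r} = sum f {l..<j} + (f j + sum f {Suc j..<r})"
    using lj by (metis sum.atLeastLessThan_concat sum.atLeast_Suc_lessThan less_imp_le)
  show ?case using IH g1 fj split by (simp add: algebra_simps)
qed

lemma filter_len_sum:
  "sum_list (map length (filter P ys)) = sum_list (map (\<lambda>s. if P s then length s else 0) ys)"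
  by (induction ys) auto

theorem lemma17:
  fixes p' v i k :: nat and S :: "nat \<Rightarrow> 'a::linorder list list" and a b :: "'a list"
  assumes "i < p'"
    and "\<And>j. j < p' \<Longrightarrow> sorted (S j)"
    and "card ({j. j < length (S i) \<and> a \<le> S i ! j \<and> S i ! j \<le> b}
               \<inter> sample_idx (S i) (omega p' S v)) = k"
  shows "real (charlen (filter (\<lambda>s. a \<le> s \<and> s \<le> b) (S i)))
           \<le> (real k + 1) * (omega p' S v + real (max_len p' S))"
proof -
  define xs where "xs = S i"
  define n where "n = length xs"
  define f where "f j = length (xs ! j)" for j
  define F where "F j = sum f {0..<j}" for j
  define w where "w = omega p' S v"
  define N where "N = charlen xs"
  define m where "m = num_samples xs w"
  define c where "c = real N / real (m+1)"
  define L where "L = max_len p' S"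
  define P where "P = (\<lambda>s. a \<le> s \<and> s \<le> b)"
  define I where "I = {j. j < length (S i) \<and> a \<le> S i ! j \<and> S i ! j \<le> b}"
  define SI where "SI = sample_idx xs w"
  have sorted: "sorted xs" using assms(1,2) unfolding xs_def by simp
  have monoF: "mono F" unfolding F_def mono_def by (simp add: sum_mono2)
  have start: "str_start xs j = F j" if "j \<le> n" for j
  proof -
    have "str_start xs j = sum_list (map length (take j xs))"
      unfolding str_start_def charlen_def by simp
    also have "\<dots> = (\<Sum>t = 0..<j. map length (take j xs) ! t)"
      using that unfolding n_def by (simp add: sum_list_sum_nth min_def)
    also have "\<dots> = F j" unfolding F_def f_def
      using that unfolding n_def by (intro sum.cong) auto
    finally show ?thesis .
  qed
  have NF: "N = F n" using start[of n] unfolding N_def str_start_def n_def by simp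
  have SIdef: "SI = {j. j < n \<and> (\<exists>q\<in>sample_positions xs w. F j \<le> q \<and> q < F (Suc j))}"
    unfolding SI_def sample_idx_def n_def using start unfolding n_def
    by (auto simp: Suc_le_eq)
  have c0: "c \<ge> 0" unfolding c_def by simp
  have Ldef: "L = Max ({0} \<union> (\<Union>j<p'. length ` set (S j)))" unfolding L_def max_len_def by simp
  have fL: "real (f j) \<le> real L" if "j < n" for j
  proof -
    have "S i ! j \<in> set (S i)" using that unfolding n_def xs_def by simp
    then have "f j \<in> length ` set (S i)" unfolding f_def xs_def by simp
    then have "f j \<in> ({0} \<union> (\<Union>j<p'. length ` set (S j)))"
      using assms(1) by blast
    moreover have "finite ({0} \<union> (\<Union>j<p'. length ` set (S j)))" by auto
    ultimately show ?thesis unfolding Ldef by simp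
  qed
  have gap: "real (sum f {l..<r}) \<le> c" if lr: "l \<le> r" "r \<le> n" "SI \<inter> {l..<r} = {}" for l r
  proof -
    have sF: "sum f {l..<r} = F r - F l" unfolding F_def
      using lr(1) by (metis add_diff_cancel_left' sum.atLeastLessThan_concat zero_le)
    show ?thesis
    proof (cases "F l < F r")
      case False
      then show ?thesis using sF c0 by simp
    next
      case True
      have "F r \<le> N" using NF monoF lr(2) by (simp add: monoD)
      moreover have "\<forall>j\<in>{1..m}. \<not> (F l \<le> nat \<lfloor>real j * real N / real (m+1)\<rfloor> \<and>
                 nat \<lfloor>real j * real N / real (m+1)\<rfloor> < F r)"
      proof (intro ballI notI)
        fix j assume j: "j \<in> {1..m}"
          and q: "F l \<le> nat \<lfloor>real j * real N / real (m+1)\<rfloor> \<and>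
                 nat \<lfloor>real j * real N / real (m+1)\<rfloor> < F r"
        define q where "q = nat \<lfloor>real j * real N / real (m+1)\<rfloor>"
        have "q \<in> (\<lambda>j. nat \<lfloor>real j * real N / real (m+1)\<rfloor>) ` {1..m}"
          using j unfolding q_def by blast
        then have qP: "q \<in> sample_positions xs w"
          unfolding sample_positions_def N_def m_def by simp
        obtain t where t: "l \<le> t" "t < r" "F t \<le> q" "q < F (Suc t)"
          using find_seg[OF monoF, of l q r] q unfolding q_def by auto
        have "t \<in> SI" unfolding SIdef using t qP lr by auto
        then show False using lr t by auto
      qed
      ultimately have "real (F r - F l) \<le> c" unfolding c_def using gap_arith True by blast
      then show ?thesis using sF by simp
    qed
  qed
  have conv: "\<exists>l r. l \<le> r \<and> r \<le> n \<and> I = {l..<r}"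
  proof (cases "I = {}")
    case True then show ?thesis by auto
  next
    case False
    have finI: "finite I" unfolding I_def by simp
    define l where "l = Min I"
    define r where "r = Suc (Max I)"
    have "I = {l..<r}"
    proof
      show "I \<subseteq> {l..<r}" unfolding l_def r_def using finI by (auto simp: less_Suc_eq_le)
      show "{l..<r} \<subseteq> I"
      proof
        fix j assume j: "j \<in> {l..<r}"
        have lI: "l \<in> I" and rI: "Max I \<in> I" unfolding l_def using finI False by auto
        have jr: "j \<le> Max I" using j unfolding r_def by simp
        have jn: "j < length (S i)" using rI jr unfolding I_def by auto
        have "S i ! l \<le> S i ! j" using sorted j jn unfolding xs_def
          by (simp add: sorted_nth_mono)
        moreover have "S i ! j \<le> S i ! Max I" using sorted jr rI unfolding xs_def I_def
          by (simp add: sorted_nth_mono)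
        ultimately show "j \<in> I" using lI rI jn unfolding I_def by auto
      qed
    qed
    moreover have "Max I < n" using finI False unfolding I_def n_def xs_def by auto
    moreover have "l \<le> r" using \<open>I = {l..<r}\<close> False by (cases "l \<le> r") auto
    ultimately show ?thesis unfolding r_def by (intro exI[of _ l] exI[of _ "Suc (Max I)"]) auto
  qed
  then obtain l r where lr: "l \<le> r" "r \<le> n" "I = {l..<r}" by blast
  have filt: "charlen (filter P xs) = sum f I"
  proof -
    have "charlen (filter P xs) = sum_list (map (\<lambda>s. if P s then length s else 0) xs)"
      unfolding charlen_def by (rule filter_len_sum)
    also have "\<dots> = (\<Sum>t = 0..<n. if P (xs ! t) then f t else 0)"
      unfolding n_def f_def by (simp add: sum_list_sum_nth)
    also have "\<dots> = sum f ({0..<n} \<inter> {t. P (xs ! t)})"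
      by (simp add: sum.inter_restrict)
    also have "{0..<n} \<inter> {t. P (xs ! t)} = I"
      unfolding I_def P_def n_def xs_def by (simp add: set_eq_iff)
    finally show ?thesis .
  qed
  have bound: "real (sum f {l..<r}) \<le> real k * real L + (real k + 1) * c"
  proof -
    have "card (I \<inter> SI) = k" using assms(3) unfolding I_def SI_def xs_def w_def .
    then have ck: "card (SI \<inter> {l..<r}) = k" using lr(3) by (simp add: Int_commute)
    show ?thesis by (rule count_bound[OF gap fL ck lr(1) lr(2)])
  qed
  have cw: "c \<le> w"
  proof (cases "N = 0")
    case True
    have "w \<ge> 0" unfolding w_def omega_def by (intro divide_nonneg_nonneg) (simp_all add: sum_nonneg)
    then show ?thesis using True unfolding c_def by simp
  next
    case False
    have "N \<le> (\<Sum>j<p'. charlen (S j))"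
      using assms(1) unfolding N_def xs_def by (intro member_le_sum) auto
    then have t0: "real (\<Sum>j<p'. charlen (S j)) > 0" using False by linarith
    have d0: "real p' * (real v + 1) > 0" using assms(1) by simp
    have wpos: "w > 0" unfolding w_def omega_def using t0 d0 by (rule divide_pos_pos)
    have Nw: "real N / w > 0" using False wpos by simp
    then have cg: "\<lceil>real N / w\<rceil> \<ge> 1" by (simp add: Suc_leI)
    have m1: "m = nat \<lceil>real N / w\<rceil> - 1" unfolding m_def num_samples_def N_def by (rule refl)
    have m2: "m + 1 = nat \<lceil>real N / w\<rceil>" using m1 cg by linarith
    have "real (m+1) = real_of_int \<lceil>real N / w\<rceil>" unfolding m2 using cg by (simp only: of_nat_nat)
    then have "real (m+1) \<ge> real N / w" by simp
    then have "real N \<le> real (m+1) * w" using wpos by (simp add: divide_le_eq mult.commute)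
    then show ?thesis unfolding c_def by (simp add: divide_le_eq mult.commute)
  qed
  have "real (charlen (filter P xs)) \<le> real k * real L + (real k + 1) * c"
    using filt bound lr by simp
  also have "\<dots> \<le> (real k + 1) * (w + real L)"
  proof -
    have h: "(real k + 1) * c \<le> (real k + 1) * w" by (rule mult_left_mono[OF cw]) simp
    have "real k * real L + (real k + 1) * c \<le> real k * real L + (real k + 1) * w" using h by linarith
    also have "\<dots> \<le> (real k + 1) * (w + real L)" by (simp add: algebra_simps)
    finally show ?thesis .
  qed
  finally show ?thesis unfolding P_def xs_def w_def L_def .
qed

end
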